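(* Let $F$ be a $4$-regular graph, let $D$ be a directed version of $F$, let $B$ be a strictly fundamental cycle basis of $F$, and let $\mathbf o$ be a transitional orientation of $F$. Then $\mathrm{CM}(F,B,D)\cdot\Delta_{D,\mathbf o}$ is totally transversally unimodular.
   Context: Graphs: $G=(V,H,E,\epsilon)$ with finite sets of vertices $V$ and half-edges $H$, a partition $E$ of $H$ into unordered pairs (edges), and $\epsilon:H\to V$; loops and multiple edges allowed. A directed version orders each edge as (tail, head). A single transition is an unordered pair of distinct half-edges incident with a common vertex; a directed single transition is such an ordered pair. A closed walk is a sequence $((h_1,h_2),\dots,(h_{n-1},h_n))$ of directed single transitions with $\{h_2,h_3\},\{h_4,h_5\},\dots,\{h_n,h_1\}$ edges, up to cyclic shift. $\sigma(D,W)\in\mathbb Z^{E}$ counts, at each edge, traversals by $W$ along its direction in $D$ minus traversals against it. An oriented circuit is a nonempty closed walk in which each half-edge occurs at most once; a circuit is one with orientation forgotten. For a maximal forest $T$ of $G$ and $e\notin T$, the fundamental circuit of $e$ is the unique circuit whose only edge outside $T$ is $e$; a strictly fundamental cycle basis w.r.t. $T$ is the set of these fundamental circuits, each with an arbitrary orientation. $\mathrm{CM}(G,\Gamma,D)$ is the $\Gamma\times E(G)$ matrix whose row indexed by $W\in\Gamma$ is $\sigma(D,W)$. $F$ is $4$-regular if every vertex is incident with exactly $4$ half-edges. A transition at $v$ is a partition of the four half-edges at $v$ into two single transitions; $\mathfrak T(F)$ is the set of all transitions, and a transversal of $\mathfrak T(F)$ is a set containing exactly one transition at each vertex. A transitional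 orientation $\mathbf o$ assigns to each transition $t$ one of its two single transitions $\mathbf o(t)$. $\Delta_{D,\mathbf o}$ is the $E(F)\times\mathfrak T(F)$ matrix over $\mathbb Q$ whose $(e,t)$ entry is $1$ if $e\cap\mathbf o(t)=\{h\}$ with $h$ the tail of $e$ in $D$, $-1$ if $e\cap\mathbf o(t)=\{h\}$ with $h$ the head, and $0$ otherwise. An $X\times\mathfrak T(F)$ matrix is totally transversally unimodular if for every transversal $T$ of $\mathfrak T(F)$, its submatrix of columns in $T$ is totally unimodular (every square submatrix has determinant in $\{-1,0,1\}$). *)

theory Defs
  imports Main "Jordan_Normal_Form.Determinant"
begin

definition is_graph :: "'v set \<Rightarrow> 'h set \<Rightarrow> 'h set set \<Rightarrow> ('h \<Rightarrow> 'v) \<Rightarrow> bool" where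
  "is_graph V H E eps \<longleftrightarrow> finite V \<and> finite H \<and> eps ` H \<subseteq> V \<and>
     (\<forall>e\<in>E. card e = 2) \<and> \<Union>E = H \<and>
     (\<forall>e1\<in>E. \<forall>e2\<in>E. e1 \<noteq> e2 \<longrightarrow> e1 \<inter> e2 = {})"

definition half_edges_at :: "'h set \<Rightarrow> ('h \<Rightarrow> 'v) \<Rightarrow> 'v \<Rightarrow> 'h set" where
  "half_edges_at H eps v = {h \<in> H. eps h = v}"

definition four_regular :: "'v set \<Rightarrow> 'h set \<Rightarrow> ('h \<Rightarrow> 'v) \<Rightarrow> bool" where
  "four_regular V H eps \<longleftrightarrow> (\<forall>v\<in>V. card (half_edges_at H eps v) = 4)"

text \<open>A directed version is encoded by the set Tl of tail half-edges:
each edge contains exactly one tail; the other half-edge is its head.\<close>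

definition directed_version :: "'h set \<Rightarrow> 'h set set \<Rightarrow> 'h set \<Rightarrow> bool" where
  "directed_version H E Tl \<longleftrightarrow> Tl \<subseteq> H \<and> (\<forall>e\<in>E. card (e \<inter> Tl) = 1)"

text \<open>A closed walk ((h1,h2),...,(h_{n-1},h_n)) is represented by the list of its
directed single transitions (a representative of the cyclic-shift class).
Edge number i of the walk is {snd (W!i), fst (W!((i+1) mod n))}, traversed from
the half-edge snd (W!i) to the half-edge fst (W!((i+1) mod n)).\<close>

definition directed_single_transition :: "'h set \<Rightarrow> ('h \<Rightarrow> 'v) \<Rightarrow> 'h \<times> 'h \<Rightarrow> bool" where
  "directed_single_transition H eps p \<longleftrightarrow>
     fst p \<in> H \<and> snd p \<in> H \<and> fst p \<noteq> snd p \<and> eps (fst p) = eps (snd p)"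

definition walk_edge :: "('h \<times> 'h) list \<Rightarrow> nat \<Rightarrow> 'h set" where
  "walk_edge W i = {snd (W ! i), fst (W ! (Suc i mod length W))}"

definition closed_walk :: "'h set \<Rightarrow> 'h set set \<Rightarrow> ('h \<Rightarrow> 'v) \<Rightarrow> ('h \<times> 'h) list \<Rightarrow> bool" where
  "closed_walk H E eps W \<longleftrightarrow>
     (\<forall>p\<in>set W. directed_single_transition H eps p) \<and>
     (\<forall>i<length W. walk_edge W i \<in> E)"

definition walk_half_edges :: "('h \<times> 'h) list \<Rightarrow> 'h list" where
  "walk_half_edges W = concat (map (\<lambda>p. [fst p, snd p]) W)"

definition oriented_circuit :: "'h set \<Rightarrow> 'h set set \<Rightarrow> ('h \<Rightarrow> 'v) \<Rightarrow> ('h \<times> 'h) list \<Rightarrow> bool" where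
  "oriented_circuit H E eps W \<longleftrightarrow>
     W \<noteq> [] \<and> closed_walk H E eps W \<and> distinct (walk_half_edges W)"

definition walk_edges :: "('h \<times> 'h) list \<Rightarrow> 'h set set" where
  "walk_edges W = {walk_edge W i | i. i < length W}"

text \<open>sigma(D,W)(e): traversals of e along its direction minus traversals against it.\<close>

definition sigma :: "'h set \<Rightarrow> ('h \<times> 'h) list \<Rightarrow> 'h set \<Rightarrow> int" where
  "sigma Tl W e =
     int (card {i. i < length W \<and> walk_edge W i = e \<and> snd (W ! i) \<in> Tl})
   - int (card {i. i < length W \<and> walk_edge W i = e \<and> snd (W ! i) \<notin> Tl})"

definition forest :: "'h set \<Rightarrow> 'h set set \<Rightarrow> ('h \<Rightarrow> 'v) \<Rightarrow> 'h set set \<Rightarrow> bool" where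
  "forest H E eps T \<longleftrightarrow> T \<subseteq> E \<and>
     \<not> (\<exists>W. oriented_circuit H E eps W \<and> walk_edges W \<subseteq> T)"

definition maximal_forest :: "'h set \<Rightarrow> 'h set set \<Rightarrow> ('h \<Rightarrow> 'v) \<Rightarrow> 'h set set \<Rightarrow> bool" where
  "maximal_forest H E eps T \<longleftrightarrow> forest H E eps T \<and>
     (\<forall>e\<in>E - T. \<not> forest H E eps (insert e T))"

text \<open>A strictly fundamental cycle basis w.r.t. T, indexed by the non-tree edges:
B e is the fundamental circuit of e (the circuit whose only non-T edge is e),
with an arbitrary orientation.\<close>

definition strictly_fundamental_basis ::
  "'h set \<Rightarrow> 'h set set \<Rightarrow> ('h \<Rightarrow> 'v) \<Rightarrow> 'h set set \<Rightarrow> ('h set \<Rightarrow> ('h \<times> 'h) list) \<Rightarrow> bool" where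
  "strictly_fundamental_basis H E eps T B \<longleftrightarrow> maximal_forest H E eps T \<and>
     (\<forall>e\<in>E - T. oriented_circuit H E eps (B e) \<and> e \<in> walk_edges (B e) \<and>
                walk_edges (B e) \<subseteq> insert e T)"

definition transitions_at :: "'h set \<Rightarrow> ('h \<Rightarrow> 'v) \<Rightarrow> 'v \<Rightarrow> 'h set set set" where
  "transitions_at H eps v = {{s1, s2} | s1 s2.
      s1 \<union> s2 = half_edges_at H eps v \<and> s1 \<inter> s2 = {} \<and> card s1 = 2 \<and> card s2 = 2}"

definition transitions :: "'v set \<Rightarrow> 'h set \<Rightarrow> ('h \<Rightarrow> 'v) \<Rightarrow> 'h set set set" where
  "transitions V H eps = (\<Union>v\<in>V. transitions_at H eps v)"

definition transversal :: "'v set \<Rightarrow> 'h set \<Rightarrow> ('h \<Rightarrow> 'v) \<Rightarrow> 'h set set set \<Rightarrow> bool" where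
  "transversal V H eps S \<longleftrightarrow> S \<subseteq> transitions V H eps \<and>
     (\<forall>v\<in>V. \<exists>!t. t \<in> S \<and> t \<in> transitions_at H eps v)"

definition transitional_orientation ::
  "'v set \<Rightarrow> 'h set \<Rightarrow> ('h \<Rightarrow> 'v) \<Rightarrow> ('h set set \<Rightarrow> 'h set) \<Rightarrow> bool" where
  "transitional_orientation V H eps ori \<longleftrightarrow> (\<forall>t\<in>transitions V H eps. ori t \<in> t)"

definition Delta :: "'h set \<Rightarrow> ('h set set \<Rightarrow> 'h set) \<Rightarrow> 'h set \<Rightarrow> 'h set set \<Rightarrow> rat" where
  "Delta Tl ori e t =
     (if \<exists>h. e \<inter> ori t = {h} \<and> h \<in> Tl then 1
      else if \<exists>h. e \<inter> ori t = {h} \<and> h \<notin> Tl then -1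
      else 0)"

text \<open>The product CM(F,B,D) * Delta_{D,o}; rows indexed by the non-tree edges
(equivalently by the circuits B e), columns by transitions.\<close>

definition CM_Delta ::
  "'h set set \<Rightarrow> 'h set \<Rightarrow> ('h set \<Rightarrow> ('h \<times> 'h) list) \<Rightarrow> ('h set set \<Rightarrow> 'h set)
     \<Rightarrow> 'h set \<Rightarrow> 'h set set \<Rightarrow> rat" where
  "CM_Delta E Tl B ori r t = (\<Sum>e\<in>E. of_int (sigma Tl (B r) e) * Delta Tl ori e t)"

text \<open>A square submatrix is
given by distinct row indices rs and distinct column indices cs of equal length
(reordering rows/columns only changes the sign of the determinant).\<close>

definition totally_unimodular :: "('r \<Rightarrow> 'c \<Rightarrow> rat) \<Rightarrow> 'r set \<Rightarrow> 'c set \<Rightarrow> bool" where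
  "totally_unimodular M R C \<longleftrightarrow>
     (\<forall>rs cs. distinct rs \<and> distinct cs \<and> set rs \<subseteq> R \<and> set cs \<subseteq> C \<and>
        length rs = length cs \<longrightarrow>
        det (mat (length rs) (length cs) (\<lambda>(i, j). M (rs ! i) (cs ! j))) \<in> {-1, 0, 1})"

definition totally_transversally_unimodular ::
  "'v set \<Rightarrow> 'h set \<Rightarrow> ('h \<Rightarrow> 'v) \<Rightarrow> ('r \<Rightarrow> 'h set set \<Rightarrow> rat) \<Rightarrow> 'r set \<Rightarrow> bool" where
  "totally_transversally_unimodular V H eps M R \<longleftrightarrow>
     (\<forall>S. transversal V H eps S \<longrightarrow> totally_unimodular M R S)"

end

theory Submission
  imports Defs
begin

definition ent :: "('c \<Rightarrow> 'x set) \<Rightarrow> 'x \<times> 'x \<Rightarrow> 'c \<Rightarrow> rat" where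
  "ent X p c = of_bool (fst p \<in> X c) - of_bool (snd p \<in> X c)"

definition del :: "'a list \<Rightarrow> nat \<Rightarrow> 'a list" where
  "del xs k = take k xs @ drop (Suc k) xs"

lemma del_length[simp]: "k < length xs \<Longrightarrow> length (del xs k) = length xs - 1"
  unfolding del_def by auto

lemma del_nth: "k < length xs \<Longrightarrow> i < length xs - 1 \<Longrightarrow> del xs k ! i = xs ! (if i < k then i else Suc i)"
  unfolding del_def by (auto simp: nth_append min_def)

lemma del_set: "set (del xs k) \<subseteq> set xs"
  unfolding del_def by (auto dest: in_set_takeD in_set_dropD)

lemma del_distinct: "distinct xs \<Longrightarrow> distinct (del xs k)"
  unfolding del_def using set_take_disj_set_drop_if_distinct[of xs k "Suc k"] by auto

lemma det_addrows:
  fixes A :: "'a::comm_ring_1 mat"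
  assumes A: "A \<in> carrier_mat n n" and i0: "i0 < n" and c0: "c i0 = 0"
  shows "det (mat n n (\<lambda>(i,j). A $$ (i,j) + c i * A $$ (i0,j))) = det A"
proof -
  have H: "k \<le> n \<Longrightarrow> det (mat n n (\<lambda>(i,j). A $$ (i,j) + (if i < k then c i else 0) * A $$ (i0,j))) = det A" for k
  proof (induction k)
    case 0
    have "mat n n (\<lambda>(i,j). A $$ (i,j) + (if i < 0 then c i else 0) * A $$ (i0,j)) = A"
      using A by (intro eq_matI) auto
    then show ?case by simp
  next
    case (Suc k)
    let ?M = "mat n n (\<lambda>(i,j). A $$ (i,j) + (if i < k then c i else 0) * A $$ (i0,j))"
    have M: "?M \<in> carrier_mat n n" by simp
    show ?case
    proof (cases "k = i0")
      case True
      have "mat n n (\<lambda>(i,j). A $$ (i,j) + (if i < Suc k then c i else 0) * A $$ (i0,j)) = ?M"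
        using True c0 by (intro eq_matI) (auto simp: less_Suc_eq)
      then show ?thesis using Suc by simp
    next
      case False
      have eq: "mat n n (\<lambda>(i,j). A $$ (i,j) + (if i < Suc k then c i else 0) * A $$ (i0,j)) = addrow (c k) k i0 ?M"
        using A c0 i0 Suc.prems by (intro eq_matI) (auto simp: algebra_simps less_Suc_eq)
      show ?thesis using eq det_addrow[OF i0 False M] Suc by simp
    qed
  qed
  have E: "mat n n (\<lambda>(i,j). A $$ (i,j) + (if i < n then c i else 0) * A $$ (i0,j)) =
      mat n n (\<lambda>(i,j). A $$ (i,j) + c i * A $$ (i0,j))" by (rule eq_matI) auto
  have "det (mat n n (\<lambda>(i,j). A $$ (i,j) + (if i < n then c i else 0) * A $$ (i0,j))) = det A"
    by (rule H) simp
  then show ?thesis unfolding E .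
qed

lemma tu_core:
  fixes Rel :: "'x \<Rightarrow> 'x \<Rightarrow> bool" and X :: "'c \<Rightarrow> 'x set"
  assumes sym: "\<And>a b. Rel a b \<Longrightarrow> Rel b a"
    and trans: "\<And>a b c. Rel a b \<Longrightarrow> Rel b c \<Longrightarrow> Rel a c"
    and leaf: "\<And>C. C \<subseteq> CC \<Longrightarrow> finite C \<Longrightarrow> C \<noteq> {} \<Longrightarrow> \<exists>c\<in>C. \<exists>D (s::rat). (s = 1 \<or> s = -1) \<and>
       (\<forall>x\<in>D. \<forall>y\<in>D. Rel x y) \<and>
       (\<forall>a b. Rel a b \<longrightarrow> of_bool (a\<in>D) - of_bool (b\<in>D) = s * ent X (a,b) c) \<and>
       (\<forall>c'\<in>C. c' \<noteq> c \<longrightarrow> D \<subseteq> X c' \<or> D \<inter> X c' = {})"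
  shows "length ps = n \<Longrightarrow> length cs = n \<Longrightarrow> distinct cs \<Longrightarrow> set cs \<subseteq> CC \<Longrightarrow>
    (\<forall>p\<in>set ps. Rel (fst p) (snd p)) \<Longrightarrow> det (mat n n (\<lambda>(i,j). ent X (ps!i) (cs!j))) \<in> {-1,0,1}"
proof (induction n arbitrary: ps cs)
  case 0
  then show ?case by (simp add: det_dim_zero)
next
  case (Suc m)
  have ne: "set cs \<noteq> {}" using Suc.prems(2) by auto
  obtain c D s where c: "c \<in> set cs" and s: "s = 1 \<or> s = -1" and Dr: "\<forall>x\<in>D. \<forall>y\<in>D. Rel x y"
    and Dent: "\<forall>a b. Rel a b \<longrightarrow> of_bool (a\<in>D) - of_bool (b\<in>D) = s * ent X (a,b) c"
    and lam: "\<forall>c'\<in>set cs. c' \<noteq> c \<longrightarrow> D \<subseteq> X c' \<or> D \<inter> X c' = {}"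
    using leaf[of "set cs"] Suc.prems ne by blast
  have ss: "s * s = 1" using s by auto
  have Dent2: "ent X (a,b) c = s * (of_bool (a\<in>D) - of_bool (b\<in>D))" if "Rel a b" for a b
    using Dent that ss by (metis mult.assoc mult_1)
  obtain j0 where j0: "j0 < Suc m" "cs!j0 = c" using c Suc.prems(2) by (metis in_set_conv_nth)
  have same: "x \<in> X (cs!j) \<longleftrightarrow> y \<in> X (cs!j)" if "x \<in> D" "y \<in> D" "j < Suc m" "j \<noteq> j0" for x y j
  proof -
    have "cs!j \<noteq> c" using j0 that Suc.prems(2,3) by (metis nth_eq_iff_index_eq)
    moreover have "cs!j \<in> set cs" using that Suc.prems(2) by auto
    ultimately show ?thesis using lam that by blast
  qed
  have key: "det (mat (Suc m) (Suc m) (\<lambda>(i,j). ent X (qs!i) (cs!j))) \<in> {-1,0,1}"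
    if qs: "length qs = Suc m" "\<forall>p\<in>set qs. Rel (fst p) (snd p)" and i0: "i0 < Suc m"
      and a0: "fst (qs!i0) \<in> D" and b0: "snd (qs!i0) \<notin> D" for qs i0
  proof -
    define a0 where "a0 = fst (qs!i0)"
    define b0 where "b0 = snd (qs!i0)"
    define g where "g i = of_bool (fst (qs!i) \<in> D) - (of_bool (snd (qs!i) \<in> D) :: rat)" for i
    have g3: "g i = 0 \<or> g i = 1 \<or> g i = -1" for i unfolding g_def by auto
    have g1: "g i = 1 \<longleftrightarrow> fst (qs!i) \<in> D \<and> snd (qs!i) \<notin> D" for i
      unfolding g_def by (cases "fst (qs!i) \<in> D"; cases "snd (qs!i) \<in> D") simp_all
    have gm1: "g i = -1 \<longleftrightarrow> fst (qs!i) \<notin> D \<and> snd (qs!i) \<in> D" for i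
      unfolding g_def by (cases "fst (qs!i) \<in> D"; cases "snd (qs!i) \<in> D") simp_all
    have g0: "g i \<noteq> 1 \<Longrightarrow> g i \<noteq> -1 \<Longrightarrow> (fst (qs!i) \<in> D \<longleftrightarrow> snd (qs!i) \<in> D)" for i
      using g1 gm1 by blast
    have gi0: "g i0 = 1" using a0 b0 unfolding g_def by simp
    have relq: "i < Suc m \<Longrightarrow> Rel (fst (qs!i)) (snd (qs!i))" for i using qs by auto
    let ?A = "mat (Suc m) (Suc m) (\<lambda>(i,j). ent X (qs!i) (cs!j))"
    define cf where "cf i = (if i = i0 then 0 else - g i)" for i
    define qs' where "qs' = map (\<lambda>i. if i = i0 then qs!i else if g i = 1 then (b0, snd (qs!i))
       else if g i = -1 then (fst (qs!i), b0) else qs!i) [0..<Suc m]"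
    have lq': "length qs' = Suc m" unfolding qs'_def by simp
    have q'n: "qs'!i = (if i = i0 then qs!i else if g i = 1 then (b0, snd (qs!i))
       else if g i = -1 then (fst (qs!i), b0) else qs!i)" if "i < Suc m" for i
      unfolding qs'_def using that by (simp del: upt_Suc)
    have A': "mat (Suc m) (Suc m) (\<lambda>(i,j). ?A $$ (i,j) + cf i * ?A $$ (i0,j)) =
        mat (Suc m) (Suc m) (\<lambda>(i,j). ent X (qs'!i) (cs!j))" (is "?L = ?R")
    proof (rule eq_matI)
      fix i j assume ij: "i < dim_row ?R" "j < dim_col ?R"
      then have i: "i < Suc m" and j: "j < Suc m" by auto
      have L: "?L $$ (i,j) = ent X (qs!i) (cs!j) + cf i * ent X (qs!i0) (cs!j)" using i j i0 by simp
      have R: "?R $$ (i,j) = ent X (qs'!i) (cs!j)" using i j by simp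
      have r0: "Rel a0 b0" using relq[OF i0] a0_def b0_def by simp
      have ri: "Rel (fst (qs!i)) (snd (qs!i))" using relq[OF i] .
      have "ent X (qs!i) (cs!j) + cf i * ent X (qs!i0) (cs!j) = ent X (qs'!i) (cs!j)"
      proof (cases "i = i0")
        case True then show ?thesis using q'n[OF i] unfolding cf_def using i by simp
      next
        case ne: False
        consider "g i = 0" | "g i = 1" | "g i = -1" using g3 by blast
        then show ?thesis
        proof cases
          case 1 then show ?thesis using q'n[OF i] unfolding cf_def using i ne by simp
        next
          case 2
          then have ai: "fst (qs!i) \<in> D" and bi: "snd (qs!i) \<notin> D" using g1 by auto
          have q'i: "qs'!i = (b0, snd (qs!i))" using q'n[OF i] i ne 2 by simp
          have rb: "Rel b0 (snd (qs!i))" using sym[OF r0] Dr ai a0 ri trans unfolding a0_def by blast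
          show ?thesis
          proof (cases "j = j0")
            case True
            then show ?thesis using Dent2[OF ri] Dent2[OF r0] Dent2[OF rb] q'i ai bi a0 b0 j0
              unfolding cf_def a0_def b0_def using ne 2 by simp
          next
            case False
            have "fst (qs!i) \<in> X (cs!j) \<longleftrightarrow> a0 \<in> X (cs!j)" using same[OF ai _ j False] a0 a0_def by blast
            then show ?thesis using q'i ne 2 unfolding cf_def ent_def a0_def b0_def by auto
          qed
        next
          case 3
          then have ai: "fst (qs!i) \<notin> D" and bi: "snd (qs!i) \<in> D" using gm1 by auto
          have q'i: "qs'!i = (fst (qs!i), b0)" using q'n[OF i] i ne 3 by simp
          have rb: "Rel (fst (qs!i)) b0" using r0 Dr bi a0 ri trans unfolding a0_def by blast
          show ?thesis
          proof (cases "j = j0")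
            case True
            then show ?thesis using Dent2[OF ri] Dent2[OF r0] Dent2[OF rb] q'i ai bi a0 b0 j0
              unfolding cf_def a0_def b0_def using ne 3 by simp
          next
            case False
            have "snd (qs!i) \<in> X (cs!j) \<longleftrightarrow> a0 \<in> X (cs!j)" using same[OF bi _ j False] a0 a0_def by blast
            then show ?thesis using q'i ne 3 unfolding cf_def ent_def a0_def b0_def by auto
          qed
        qed
      qed
      then show "?L $$ (i,j) = ?R $$ (i,j)" using L R by simp
    qed auto
    have relq': "\<forall>p\<in>set qs'. Rel (fst p) (snd p)"
    proof
      fix p assume "p \<in> set qs'"
      then obtain i where i: "i < Suc m" and p: "p = qs'!i" using lq' by (metis in_set_conv_nth)
      have r0: "Rel a0 b0" using relq[OF i0] a0_def b0_def by simp
      have ri: "Rel (fst (qs!i)) (snd (qs!i))" using relq[OF i] .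
      consider "i = i0" | "i \<noteq> i0" "g i = 1" | "i \<noteq> i0" "g i = -1" | "i \<noteq> i0" "g i \<noteq> 1" "g i \<noteq> -1" by blast
      then show "Rel (fst p) (snd p)"
      proof cases
        case 1 then show ?thesis using p ri i q'n[OF i] by simp
      next
        case 2
        then have ai: "fst (qs!i) \<in> D" using g1 by auto
        have "Rel b0 (snd (qs!i))" using sym[OF r0] Dr ai a0 ri trans unfolding a0_def by blast
        then show ?thesis using p i 2 q'n[OF i] by simp
      next
        case 3
        then have bi: "snd (qs!i) \<in> D" using gm1 by auto
        have "Rel (fst (qs!i)) b0" using r0 Dr bi a0 ri trans unfolding a0_def by blast
        then show ?thesis using p i 3 q'n[OF i] by simp
      next
        case 4 then show ?thesis using p ri i q'n[OF i] by simp
      qed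
    qed
    have col0: "ent X (qs'!i) (cs!j0) = 0" if "i < Suc m" "i \<noteq> i0" for i
    proof -
      have ri: "Rel (fst (qs'!i)) (snd (qs'!i))" using relq' that lq' by (metis nth_mem)
      have "fst (qs'!i) \<in> D \<longleftrightarrow> snd (qs'!i) \<in> D"
      proof (cases "g i = 1")
        case True then show ?thesis using that g1[of i] b0 q'n[OF that(1)] unfolding b0_def by simp
      next
        case f1: False
        show ?thesis
        proof (cases "g i = -1")
          case True then show ?thesis using that gm1[of i] b0 q'n[OF that(1)] f1 unfolding b0_def by simp
        next
          case False then show ?thesis using that g0[of i] f1 q'n[OF that(1)] by simp
        qed
      qed
      then have "of_bool (fst (qs'!i) \<in> D) - of_bool (snd (qs'!i) \<in> D) = (0::rat)" by simp
      then show ?thesis using Dent2[OF ri] j0 by simp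
    qed
    have col00: "ent X (qs'!i0) (cs!j0) = s"
      using Dent2[of "fst (qs!i0)" "snd (qs!i0)"] relq[OF i0] a0 b0 j0 i0 q'n[OF i0] by simp
    let ?A' = "mat (Suc m) (Suc m) (\<lambda>(i,j). ent X (qs'!i) (cs!j))"
    have detA: "det ?A = det ?A'"
      using det_addrows[of ?A "Suc m" i0 cf] i0 A' unfolding cf_def by simp
    have Y0: "(\<Sum>i\<in>{..<Suc m} - {i0}. ?A' $$ (i,j0) * cofactor ?A' i j0) = 0"
      by (rule sum.neutral) (use col0 j0 in auto)
    have "det ?A' = (\<Sum>i<Suc m. ?A' $$ (i,j0) * cofactor ?A' i j0)"
      by (rule laplace_expansion_column[OF _ j0(1)]) simp
    also have "\<dots> = ?A' $$ (i0,j0) * cofactor ?A' i0 j0 + (\<Sum>i\<in>{..<Suc m} - {i0}. ?A' $$ (i,j0) * cofactor ?A' i j0)"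
      by (rule sum.remove) (use i0 in auto)
    also have "\<dots> = ?A' $$ (i0,j0) * cofactor ?A' i0 j0"
      using Y0 by simp
    also have "\<dots> = s * ((-1)^(i0+j0) * det (mat_delete ?A' i0 j0))"
      using col00 i0 j0 unfolding cofactor_def by simp
    finally have d1: "det ?A' = s * ((-1)^(i0+j0) * det (mat_delete ?A' i0 j0))" .
    have md: "mat_delete ?A' i0 j0 = mat m m (\<lambda>(i,j). ent X (del qs' i0 ! i) (del cs j0 ! j))"
    proof (rule eq_matI)
      fix i j assume "i < dim_row (mat m m (\<lambda>(i,j). ent X (del qs' i0 ! i) (del cs j0 ! j)))"
        "j < dim_col (mat m m (\<lambda>(i,j). ent X (del qs' i0 ! i) (del cs j0 ! j)))"
      then have i: "i < m" and j: "j < m" by auto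
      have "mat_delete ?A' i0 j0 $$ (i,j) = ?A' $$ (if i < i0 then i else Suc i, if j < j0 then j else Suc j)"
        unfolding mat_delete_def using i j by simp
      also have "\<dots> = ent X (qs' ! (if i < i0 then i else Suc i)) (cs ! (if j < j0 then j else Suc j))"
        using i j by auto
      also have "\<dots> = ent X (del qs' i0 ! i) (del cs j0 ! j)"
        using del_nth[of i0 qs' i] del_nth[of j0 cs j] i j i0 j0 lq' Suc.prems(2) by simp
      finally show "mat_delete ?A' i0 j0 $$ (i,j) = mat m m (\<lambda>(i,j). ent X (del qs' i0 ! i) (del cs j0 ! j)) $$ (i,j)"
        using i j by simp
    qed auto
    have l1: "length (del qs' i0) = m" using lq' i0 by simp
    have l2: "length (del cs j0) = m" using Suc.prems(2) j0 by simp
    have d: "distinct (del cs j0)" using del_distinct Suc.prems(3) by blast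
    have st: "set (del cs j0) \<subseteq> CC" using del_set[of cs j0] Suc.prems(4) by blast
    have rl: "\<forall>p\<in>set (del qs' i0). Rel (fst p) (snd p)" using del_set[of qs' i0] relq' by blast
    have "det (mat m m (\<lambda>(i,j). ent X (del qs' i0 ! i) (del cs j0 ! j))) \<in> {-1,0,1}"
      by (rule Suc.IH[OF l1 l2 d st rl])
    then have "det (mat_delete ?A' i0 j0) \<in> {-1,0,1}" using md by simp
    moreover have "(-1::rat)^(i0+j0) = 1 \<or> (-1::rat)^(i0+j0) = -1" by (simp add: minus_one_power_iff)
    ultimately show ?thesis using detA d1 s by auto
  qed
  let ?A = "mat (Suc m) (Suc m) (\<lambda>(i,j). ent X (ps!i) (cs!j))"
  show ?case
  proof (cases "\<exists>i0<Suc m. (fst (ps!i0) \<in> D) \<noteq> (snd (ps!i0) \<in> D)")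
    case True
    then obtain i0 where i0: "i0 < Suc m" and ne: "(fst (ps!i0) \<in> D) \<noteq> (snd (ps!i0) \<in> D)" by blast
    show ?thesis
    proof (cases "fst (ps!i0) \<in> D")
      case True
      then show ?thesis using key[OF Suc.prems(1) Suc.prems(5) i0] ne by simp
    next
      case False
      define qs where "qs = ps[i0 := (snd (ps!i0), fst (ps!i0))]"
      have lq: "length qs = Suc m" using Suc.prems(1) unfolding qs_def by simp
      have rq: "\<forall>p\<in>set qs. Rel (fst p) (snd p)"
      proof
        fix p assume "p \<in> set qs"
        then have "p \<in> insert (snd (ps!i0), fst (ps!i0)) (set ps)"
          using set_update_subset_insert[of ps i0] unfolding qs_def by blast
        moreover have "ps!i0 \<in> set ps" using i0 Suc.prems(1) by simp
        ultimately show "Rel (fst p) (snd p)" using Suc.prems(5) sym[of "fst (ps!i0)" "snd (ps!i0)"] by auto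
      qed
      have k: "det (mat (Suc m) (Suc m) (\<lambda>(i,j). ent X (qs!i) (cs!j))) \<in> {-1,0,1}"
      proof (rule key[OF lq rq i0])
        have "qs!i0 = (snd (ps!i0), fst (ps!i0))" unfolding qs_def using i0 Suc.prems(1) by simp
        then show "fst (qs!i0) \<in> D" "snd (qs!i0) \<notin> D" using False ne by auto
      qed
      have qi: "qs!i = (if i = i0 then (snd (ps!i0), fst (ps!i0)) else ps!i)" if "i < Suc m" for i
        unfolding qs_def using that Suc.prems(1) by simp
      have "mat (Suc m) (Suc m) (\<lambda>(i,j). ent X (qs!i) (cs!j)) = multrow i0 (-1) ?A"
      proof (rule eq_matI)
        fix i j assume "i < dim_row (multrow i0 (-1) ?A)" "j < dim_col (multrow i0 (-1) ?A)"
        then have i: "i < Suc m" and j: "j < Suc m" by auto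
        show "mat (Suc m) (Suc m) (\<lambda>(i,j). ent X (qs!i) (cs!j)) $$ (i,j) = multrow i0 (-1) ?A $$ (i,j)"
        proof -
          have m1: "multrow i0 (-1) ?A $$ (i,j) = (if i0 = i then -1 * ent X (ps!i) (cs!j) else ent X (ps!i) (cs!j))"
            unfolding mat_multrow_gen_def using i j by simp
          have m2: "mat (Suc m) (Suc m) (\<lambda>(i,j). ent X (qs!i) (cs!j)) $$ (i,j) = ent X (qs!i) (cs!j)"
            using i j by simp
          show ?thesis
          proof (cases "i = i0")
            case True
            then show ?thesis unfolding m1 m2 qi[OF i] by (simp add: ent_def)
          next
            case False
            then show ?thesis unfolding m1 m2 qi[OF i] by simp
          qed
        qed
      qed auto
      have cA: "?A \<in> carrier_mat (Suc m) (Suc m)" by simp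
      have "det (multrow i0 (-1) ?A) = -1 * det ?A" by (rule det_multrow[OF i0 cA])
      then have "det (mat (Suc m) (Suc m) (\<lambda>(i,j). ent X (qs!i) (cs!j))) = - det ?A"
        using \<open>mat (Suc m) (Suc m) (\<lambda>(i,j). ent X (qs!i) (cs!j)) = multrow i0 (-1) ?A\<close> by simp
      then have "det ?A = - det (mat (Suc m) (Suc m) (\<lambda>(i,j). ent X (qs!i) (cs!j)))" by simp
      then show ?thesis using k by (auto simp del: det_def')
    qed
  next
    case False
    have Y0: "(\<Sum>i<Suc m. ?A $$ (i,j0) * cofactor ?A i j0) = 0"
    proof (rule sum.neutral, rule ballI)
      fix i assume "i \<in> {..<Suc m}"
      then have i: "i < Suc m" by simp
      then have r: "Rel (fst (ps!i)) (snd (ps!i))" using Suc.prems(1,5) by simp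
      have "(fst (ps!i) \<in> D) = (snd (ps!i) \<in> D)" using False i by blast
      then have "ent X (fst (ps!i), snd (ps!i)) c = 0" using Dent2[OF r] by simp
      then have "ent X (ps!i) c = 0" by simp
      then show "?A $$ (i,j0) * cofactor ?A i j0 = 0" using i j0 by simp
    qed
    have "det ?A = (\<Sum>i<Suc m. ?A $$ (i,j0) * cofactor ?A i j0)"
      by (rule laplace_expansion_column[OF _ j0(1)]) simp
    then have "det ?A = 0" by (simp only: Y0)
    then show ?thesis by (metis insertCI)
  qed
qed

definition chain :: "('a \<Rightarrow> 'a \<Rightarrow> bool) \<Rightarrow> 'a list \<Rightarrow> bool" where
  "chain R xs \<longleftrightarrow> (\<forall>i. Suc i < length xs \<longrightarrow> R (xs!i) (xs!Suc i))"

lemma rtranclp_chain: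
  assumes "R\<^sup>*\<^sup>* a b"
  shows "\<exists>xs. xs \<noteq> [] \<and> xs!0 = a \<and> xs!(length xs - 1) = b \<and> chain R xs"
  using assms
proof (induction rule: rtranclp_induct)
  case base
  then show ?case by (intro exI[of _ "[a]"]) (auto simp: chain_def)
next
  case (step y z)
  then obtain xs where xs: "xs \<noteq> []" "xs!0 = a" "xs!(length xs - 1) = y" "chain R xs" by blast
  have "chain R (xs @ [z])" unfolding chain_def
  proof (intro allI impI)
    fix i assume i: "Suc i < length (xs @ [z])"
    show "R ((xs @ [z])!i) ((xs @ [z])!Suc i)"
    proof (cases "Suc i < length xs")
      case True then show ?thesis using xs(4) unfolding chain_def by (simp add: nth_append)
    next
      case False
      then have "i = length xs - 1" "Suc i = length xs" using i by auto
      then show ?thesis using xs(3) step(2) xs(1) by (simp add: nth_append)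
    qed
  qed
  then show ?case using xs by (intro exI[of _ "xs @ [z]"]) (auto simp: nth_append)
qed

lemma cut_length: "i \<le> j \<Longrightarrow> j < length xs \<Longrightarrow> length (take i xs @ drop j xs) = length xs - j + i"
  by simp

lemma cut_nth: "i \<le> j \<Longrightarrow> j < length xs \<Longrightarrow> k < length xs - j + i \<Longrightarrow>
   (take i xs @ drop j xs)!k = (if k < i then xs!k else xs!(k - i + j))"
  apply (auto simp: nth_append min_def)
  apply (rule arg_cong[where f="(!) xs"])
  by linarith

lemma cut_chain:
  assumes "chain R xs" "i \<le> j" "j < length xs" "0 < i \<Longrightarrow> R (xs!(i-1)) (xs!j)"
  shows "chain R (take i xs @ drop j xs)"
  unfolding chain_def
proof (intro allI impI)
  fix k assume k: "Suc k < length (take i xs @ drop j xs)"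
  then have k': "Suc k < length xs - j + i" using assms by simp
  show "R ((take i xs @ drop j xs)!k) ((take i xs @ drop j xs)!Suc k)"
  proof (cases "Suc k < i")
    case True
    then have "Suc k < length xs" using assms(2,3) by simp
    then have "R (xs!k) (xs!Suc k)" using assms(1) unfolding chain_def by blast
    then show ?thesis using True cut_nth[OF assms(2,3)] k' by auto
  next
    case False
    show ?thesis
    proof (cases "Suc k = i")
      case True
      then show ?thesis using assms(4) cut_nth[OF assms(2,3)] k' by auto
    next
      case False
      then have "i \<le> k" using \<open>\<not> Suc k < i\<close> by simp
      moreover have "Suc (k - i + j) < length xs" using k' \<open>i \<le> k\<close> by simp
      ultimately show ?thesis using assms(1) cut_nth[OF assms(2,3)] k' unfolding chain_def
        by (auto simp: Suc_diff_le)
    qed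
  qed
qed

lemma chain_take: "chain R xs \<Longrightarrow> chain R (take k xs)"
  unfolding chain_def by auto

lemma walk_half_edges_Cons: "walk_half_edges (p # W) = fst p # snd p # walk_half_edges W"
  unfolding walk_half_edges_def by simp

lemma walk_half_edges_length: "length (walk_half_edges W) = 2 * length W"
  by (induction W) (auto simp: walk_half_edges_Cons walk_half_edges_def)

lemma walk_half_edges_nth: "i < 2 * length W \<Longrightarrow>
   walk_half_edges W ! i = (if even i then fst (W ! (i div 2)) else snd (W ! (i div 2)))"
proof (induction W arbitrary: i)
  case Nil then show ?case by simp
next
  case (Cons p W)
  show ?case
  proof (cases i)
    case 0 then show ?thesis by (simp add: walk_half_edges_Cons)
  next
    case (Suc i')
    show ?thesis
    proof (cases i')
      case 0 then show ?thesis using Suc by (simp add: walk_half_edges_Cons)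
    next
      case (Suc i'')
      then have "i'' < 2 * length W" using Cons.prems \<open>i = Suc i'\<close> by simp
      then show ?thesis using Cons.IH[of i''] \<open>i = Suc i'\<close> Suc by (simp add: walk_half_edges_Cons)
    qed
  qed
qed

lemma walk_half_edges_pairs:
  assumes "length g = 2 * N"
  shows "walk_half_edges (map (\<lambda>j. (g!(2*j), g!(2*j+1))) [0..<N]) = g"
proof (rule nth_equalityI)
  show "length (walk_half_edges (map (\<lambda>j. (g!(2*j), g!(2*j+1))) [0..<N])) = length g"
    using assms by (simp add: walk_half_edges_length)
  fix i assume "i < length (walk_half_edges (map (\<lambda>j. (g!(2*j), g!(2*j+1))) [0..<N]))"
  then have i: "i < 2 * N" by (simp add: walk_half_edges_length)
  then have "i div 2 < N" by simp
  then show "walk_half_edges (map (\<lambda>j. (g!(2*j), g!(2*j+1))) [0..<N]) ! i = g ! i"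
    using i by (auto simp: walk_half_edges_nth elim!: evenE oddE)
qed

locale G =
  fixes V :: "'v set" and H :: "'h set" and E :: "'h set set" and eps :: "'h \<Rightarrow> 'v" and T :: "'h set set"
  assumes graph: "is_graph V H E eps" and forestT: "forest H E eps T"
begin

lemma TE: "T \<subseteq> E" using forestT unfolding forest_def by simp
lemma Ecard: "e \<in> E \<Longrightarrow> card e = 2" using graph unfolding is_graph_def by simp
lemma EH: "e \<in> E \<Longrightarrow> e \<subseteq> H" using graph unfolding is_graph_def by auto
lemma Edisj: "e1 \<in> E \<Longrightarrow> e2 \<in> E \<Longrightarrow> x \<in> e1 \<Longrightarrow> x \<in> e2 \<Longrightarrow> e1 = e2"
  using graph unfolding is_graph_def by blast
lemma finH: "finite H" using graph unfolding is_graph_def by simp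
lemma finE: "finite E"
proof -
  have "E \<subseteq> Pow H" using EH by auto
  then show ?thesis using finH finite_subset by blast
qed
lemma pair_ne: "{x,y} \<in> E \<Longrightarrow> x \<noteq> y" using Ecard by fastforce
lemma pair_H: "{x,y} \<in> E \<Longrightarrow> x \<in> H \<and> y \<in> H" using EH by auto

definition Rt :: "'v \<Rightarrow> 'h set \<Rightarrow> 'h \<Rightarrow> 'h \<Rightarrow> bool" where
  "Rt v P x y \<longleftrightarrow> {x,y} \<in> T \<or> (x \<in> H \<and> y \<in> H \<and> eps x = eps y \<and> (eps x = v \<longrightarrow> (x \<in> P \<longleftrightarrow> y \<in> P)))"

definition Ra :: "'h \<Rightarrow> 'h \<Rightarrow> bool" where
  "Ra x y \<longleftrightarrow> {x,y} \<in> T \<or> (x \<in> H \<and> y \<in> H \<and> eps x = eps y)"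

lemma Rt_sym: "Rt v P x y \<Longrightarrow> Rt v P y x"
  unfolding Rt_def by (auto simp: insert_commute)
lemma Ra_sym: "Ra x y \<Longrightarrow> Ra y x"
  unfolding Ra_def by (auto simp: insert_commute)
lemma Rt_Ra: "Rt v P x y \<Longrightarrow> Ra x y"
  unfolding Rt_def Ra_def by auto
lemma Rt_H: "Rt v P x y \<Longrightarrow> x \<in> H \<and> y \<in> H"
  unfolding Rt_def using TE pair_H by blast

lemma sep:
  assumes P: "P \<subseteq> half_edges_at H eps v" and p: "p \<in> P"
    and q: "q \<in> half_edges_at H eps v" "q \<notin> P"
  shows "\<not> (Rt v P)\<^sup>*\<^sup>* p q"
proof
  assume pq: "(Rt v P)\<^sup>*\<^sup>* p q"
  define Q where "Q = half_edges_at H eps v - P"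
  have hv: "h \<in> half_edges_at H eps v \<longleftrightarrow> h \<in> H \<and> eps h = v" for h unfolding half_edges_at_def by simp
  define good where "good xs \<longleftrightarrow> xs \<noteq> [] \<and> xs!0 \<in> P \<and> xs!(length xs - 1) \<in> Q \<and> chain (Rt v P) xs" for xs
  have "\<exists>xs. good xs" using rtranclp_chain[OF pq] p q unfolding good_def Q_def by blast
  then obtain xs where gx: "good xs" and minx: "\<And>ys. good ys \<Longrightarrow> length xs \<le> length ys"
    using ex_has_least_nat[of good _ length] by metis
  define m where "m = length xs - 1"
  have lx: "length xs = Suc m" using gx unfolding good_def m_def by auto
  have x0: "xs!0 \<in> P" and xm: "xs!m \<in> Q" and ch: "chain (Rt v P) xs"
    using gx unfolding good_def m_def by auto
  have m0: "m \<noteq> 0"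
  proof
    assume "m = 0" then show False using x0 xm unfolding Q_def by auto
  qed
  have step: "Rt v P (xs!i) (xs!Suc i)" if "i < m" for i using ch lx that unfolding chain_def by auto
  have xH: "xs!i \<in> H" if "i \<le> m" for i
  proof (cases "i < m")
    case True then show ?thesis using step Rt_H by blast
  next
    case False then have "i = m" using that by simp
    then show ?thesis using xm unfolding Q_def half_edges_at_def by simp
  qed
  have dist: "distinct xs"
  proof (rule ccontr)
    assume "\<not> distinct xs"
    then obtain i j where ij: "i < j" "j < length xs" "xs!i = xs!j"
      by (metis distinct_conv_nth linorder_neqE_nat)
    let ?ys = "take i xs @ drop j xs"
    have chy: "chain (Rt v P) ?ys"
    proof (rule cut_chain[OF ch])
      show "i \<le> j" "j < length xs" using ij by auto
      assume "0 < i"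
      then show "Rt v P (xs!(i-1)) (xs!j)" using step[of "i-1"] ij lx by simp
    qed
    have ly: "length ?ys = length xs - j + i" using ij by simp
    have y0: "?ys!0 = xs!0" using cut_nth[of i j xs 0] ij by (cases "i = 0") auto
    have yl: "?ys!(length ?ys - 1) = xs!m"
      using cut_nth[of i j xs "length xs - j + i - 1"] ij ly lx by auto
    have ne: "?ys \<noteq> []" using ly ij by auto
    have "good ?ys" unfolding good_def y0 yl using ne chy x0 xm by blast
    then show False using minx ly ij by fastforce
  qed
  have noR2: "\<not> Rt v P (xs!i) (xs!(i+2))" if "i + 2 \<le> m" for i
  proof
    assume r: "Rt v P (xs!i) (xs!(i+2))"
    let ?ys = "take (i+1) xs @ drop (i+2) xs"
    have chy: "chain (Rt v P) ?ys"
      by (rule cut_chain[OF ch]) (use that lx r in auto)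
    have ly: "length ?ys = length xs - 1" using that lx by simp
    have y0: "?ys!0 = xs!0" using cut_nth[of "i+1" "i+2" xs 0] that lx by auto
    have yl: "?ys!(length ?ys - 1) = xs!m"
    proof -
      have mm: "Suc (Suc (m - 2)) = m" using that by simp
      show ?thesis using cut_nth[of "i+1" "i+2" xs "length xs - 2"] that ly lx mm by auto
    qed
    have ne: "?ys \<noteq> []" using ly lx m0 by auto
    have "good ?ys" unfolding good_def y0 yl using ne chy x0 xm by blast
    then show False using minx ly lx by fastforce
  qed
  have x1: "xs!1 \<notin> P"
  proof
    assume a: "xs!1 \<in> P"
    let ?ys = "take 0 xs @ drop 1 xs"
    have chy: "chain (Rt v P) ?ys" by (rule cut_chain[OF ch]) (use m0 lx in auto)
    have "good ?ys" unfolding good_def using chy a xm m0 lx by auto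
    then show False using minx m0 lx by fastforce
  qed
  have xm1: "xs!(m-1) \<notin> Q"
  proof
    assume a: "xs!(m-1) \<in> Q"
    let ?ys = "take m xs"
    have chy: "chain (Rt v P) ?ys" by (rule chain_take[OF ch])
    have "good ?ys" unfolding good_def using chy a x0 m0 lx by auto
    then show False using minx m0 lx by fastforce
  qed
  define Ts where "Ts i \<longleftrightarrow> {xs!i, xs!Suc i} \<in> T" for i
  have nonT: "xs!i \<in> H \<and> xs!Suc i \<in> H \<and> eps (xs!i) = eps (xs!Suc i) \<and>
      (eps (xs!i) = v \<longrightarrow> (xs!i \<in> P \<longleftrightarrow> xs!Suc i \<in> P))" if "i < m" "\<not> Ts i" for i
    using step[OF that(1)] that(2) unfolding Rt_def Ts_def by blast
  have T0: "Ts 0"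
  proof (rule ccontr)
    assume "\<not> Ts 0"
    from nonT[OF _ this] m0 have "eps (xs!0) = eps (xs!1)" "eps (xs!0) = v \<longrightarrow> (xs!0 \<in> P \<longleftrightarrow> xs!1 \<in> P)" by auto
    moreover have "eps (xs!0) = v" using x0 P unfolding half_edges_at_def by auto
    ultimately show False using x0 x1 by auto
  qed
  have Tlast: "Ts (m-1)"
  proof (rule ccontr)
    assume "\<not> Ts (m-1)"
    from nonT[OF _ this] m0 have "xs!(m-1) \<in> H" "eps (xs!(m-1)) = eps (xs!m)"
      "eps (xs!(m-1)) = v \<longrightarrow> (xs!(m-1) \<in> P \<longleftrightarrow> xs!m \<in> P)" by auto
    moreover have "eps (xs!m) = v" "xs!m \<notin> P" using xm unfolding Q_def half_edges_at_def by auto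
    ultimately show False using xm1 unfolding Q_def half_edges_at_def by auto
  qed
  have alt1: "\<not> Ts (Suc i)" if "Suc i < m" "Ts i" for i
  proof
    assume "Ts (Suc i)"
    then have e1: "{xs!i, xs!Suc i} \<in> E" "{xs!Suc i, xs!Suc (Suc i)} \<in> E" using that TE unfolding Ts_def by auto
    then have "{xs!i, xs!Suc i} = {xs!Suc i, xs!Suc (Suc i)}" using Edisj by blast
    moreover have "xs!i \<noteq> xs!Suc i" using pair_ne e1 by blast
    ultimately have "xs!i = xs!Suc (Suc i)" by (metis doubleton_eq_iff)
    moreover have "i \<noteq> Suc (Suc i)" by simp
    ultimately show False using dist that lx by (simp add: nth_eq_iff_index_eq)
  qed
  have alt2: "Ts (Suc i)" if "Suc i < m" "\<not> Ts i" for i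
  proof (rule ccontr)
    assume "\<not> Ts (Suc i)"
    from nonT[OF _ this] nonT[OF _ that(2)] that(1)
    have "Rt v P (xs!i) (xs!(i+2))" unfolding Rt_def by auto
    then show False using noR2[of i] that by simp
  qed
  have par: "i < m \<Longrightarrow> (Ts i \<longleftrightarrow> even i)" for i
  proof (induction i)
    case 0 then show ?case using T0 by simp
  next
    case (Suc i)
    then show ?case using alt1[of i] alt2[of i] by auto
  qed
  have "even (m-1)" using par[of "m-1"] Tlast m0 by simp
  then obtain k where mk: "m = 2*k+1" using m0 by (metis Suc_diff_1 add.commute evenE gr0I plus_1_eq_Suc)
  define g where "g = xs!m # take m xs"
  have lg: "length g = 2*(k+1)" unfolding g_def using lx mk by simp
  have g0: "g!0 = xs!m" unfolding g_def by simp
  have gS: "g!(Suc i) = xs!i" if "i < m" for i unfolding g_def using that by simp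
  define W where "W = map (\<lambda>j. (g!(2*j), g!(2*j+1))) [0..<k+1]"
  have lW: "length W = k+1" unfolding W_def by simp
  have Wn: "W!j = (g!(2*j), g!(2*j+1))" if "j < k+1" for j unfolding W_def using that by (simp del: upt_Suc)
  have whe: "walk_half_edges W = g" unfolding W_def by (rule walk_half_edges_pairs[OF lg])
  have xsplit: "xs = take m xs @ [xs!m]" using lx by (metis lessI take_Suc_conv_app_nth take_all order_refl)
  have dg: "distinct g"
  proof -
    have "distinct (take m xs @ [xs!m])" using dist xsplit by simp
    then show ?thesis unfolding g_def by auto
  qed
  have we: "walk_edge W j = {xs!(2*j), xs!(2*j+1)}" if "j < k+1" for j
  proof -
    have s: "snd (W!j) = xs!(2*j)" using Wn[OF that] gS[of "2*j"] that mk by simp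
    have f: "fst (W!(Suc j mod length W)) = xs!(2*j+1)"
    proof (cases "j < k")
      case True
      then have "Suc j mod length W = Suc j" using lW by simp
      then show ?thesis using Wn[of "Suc j"] gS[of "2*j+1"] True mk by simp
    next
      case False
      then have "j = k" using that by simp
      then have "Suc j mod length W = 0" using lW by simp
      then show ?thesis using Wn[of 0] g0 mk \<open>j = k\<close> by simp
    qed
    show ?thesis unfolding walk_edge_def using s f by simp
  qed
  have wT: "walk_edge W j \<in> T" if "j < k+1" for j
    using we[OF that] par[of "2*j"] that mk unfolding Ts_def by simp
  have trs: "directed_single_transition H eps p" if "p \<in> set W" for p
  proof -
    obtain j where j: "j < k+1" "p = W!j" using \<open>p \<in> set W\<close> lW by (metis in_set_conv_nth)
    show ?thesis
    proof (cases "j = 0")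
      case True
      then have "p = (xs!m, xs!0)" using j Wn g0 gS[of 0] m0 by simp
      moreover have "xs!m \<noteq> xs!0" using dist m0 lx by (simp add: nth_eq_iff_index_eq)
      moreover have "eps (xs!m) = v" "eps (xs!0) = v" "xs!m \<in> H" "xs!0 \<in> H"
        using xm x0 P unfolding Q_def half_edges_at_def by auto
      ultimately show ?thesis unfolding directed_single_transition_def by simp
    next
      case False
      then obtain j' where j': "j = Suc j'" by (metis not0_implies_Suc)
      have pj: "p = (xs!(2*j'+1), xs!(2*j'+2))" using j Wn gS[of "2*j'+1"] gS[of "2*j'+2"] j' mk by simp
      have lt: "2*j'+1 < m" using j j' mk by simp
      have "\<not> Ts (2*j'+1)" using par[OF lt] by simp
      from nonT[OF lt this] have "xs!(2*j'+1) \<in> H" "xs!(2*j'+2) \<in> H" "eps (xs!(2*j'+1)) = eps (xs!(2*j'+2))"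
        by auto
      moreover have "xs!(2*j'+1) \<noteq> xs!(2*j'+2)" using dist lt lx by (simp add: nth_eq_iff_index_eq)
      ultimately show ?thesis unfolding directed_single_transition_def pj by simp
    qed
  qed
  have oc: "oriented_circuit H E eps W"
    unfolding oriented_circuit_def closed_walk_def using lW trs wT TE whe dg by auto
  have "walk_edges W \<subseteq> T" unfolding walk_edges_def using wT lW by auto
  then show False using oc forestT unfolding forest_def by blast
qed


lemma rt_sym: "(Rt v P)\<^sup>*\<^sup>* a b \<Longrightarrow> (Rt v P)\<^sup>*\<^sup>* b a"
proof (induction rule: rtranclp_induct)
  case base then show ?case by simp
next
  case (step y z)
  then show ?case using Rt_sym converse_rtranclp_into_rtranclp by metis
qed

lemma ra_sym: "Ra\<^sup>*\<^sup>* a b \<Longrightarrow> Ra\<^sup>*\<^sup>* b a"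
proof (induction rule: rtranclp_induct)
  case base then show ?case by simp
next
  case (step y z)
  then show ?case using Ra_sym converse_rtranclp_into_rtranclp by metis
qed

lemma rt_ra: "(Rt v P)\<^sup>*\<^sup>* a b \<Longrightarrow> Ra\<^sup>*\<^sup>* a b"
  by (induction rule: rtranclp_induct) (auto intro: rtranclp.rtrancl_into_rtrancl Rt_Ra)

lemma two_classes:
  assumes "Ra\<^sup>*\<^sup>* a x" "a \<in> half_edges_at H eps v" "p \<in> P" "q \<in> half_edges_at H eps v" "q \<notin> P"
    "P \<subseteq> half_edges_at H eps v"
  shows "(Rt v P)\<^sup>*\<^sup>* p x \<or> (Rt v P)\<^sup>*\<^sup>* q x"
  using assms(1)
proof (induction rule: rtranclp_induct)
  case base
  show ?case
  proof (cases "a \<in> P")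
    case True
    then have "Rt v P p a" using assms(2-6) unfolding Rt_def half_edges_at_def by auto
    then show ?thesis by auto
  next
    case False
    then have "Rt v P q a" using assms(2-6) unfolding Rt_def half_edges_at_def by auto
    then show ?thesis by auto
  qed
next
  case (step y z)
  show ?case
  proof (cases "Rt v P y z")
    case True
    then show ?thesis using step(3) by (meson rtranclp.rtrancl_into_rtrancl)
  next
    case False
    then have z: "z \<in> half_edges_at H eps v" using step(2) unfolding Ra_def Rt_def half_edges_at_def by auto
    show ?thesis
    proof (cases "z \<in> P")
      case True
      then have "Rt v P p z" using assms(3-6) z unfolding Rt_def half_edges_at_def by auto
      then show ?thesis by auto
    next
      case False
      then have "Rt v P q z" using assms(3-6) z unfolding Rt_def half_edges_at_def by auto
      then show ?thesis by auto
    qed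
  qed
qed

lemma class_sub:
  assumes "(Rt v P)\<^sup>*\<^sup>* d x" and avoid: "\<And>y. (Rt v P)\<^sup>*\<^sup>* d y \<Longrightarrow> y \<notin> half_edges_at H eps w"
    and "(Rt w P')\<^sup>*\<^sup>* c d"
  shows "(Rt w P')\<^sup>*\<^sup>* c x"
  using assms(1)
proof (induction rule: rtranclp_induct)
  case base then show ?case using assms(3) .
next
  case (step y z)
  have "y \<notin> half_edges_at H eps w" using avoid step(1) by blast
  then have "Rt w P' y z" using step(2) Rt_H[OF step(2)] unfolding Rt_def half_edges_at_def by auto
  then show ?case using step(3) by (meson rtranclp.rtrancl_into_rtrancl)
qed

lemma class_disj:
  assumes "(Rt v P)\<^sup>*\<^sup>* d x" and avoid: "\<And>y. (Rt v P)\<^sup>*\<^sup>* d y \<Longrightarrow> y \<notin> half_edges_at H eps w"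
    and "\<not> (Rt w P')\<^sup>*\<^sup>* c d"
  shows "\<not> (Rt w P')\<^sup>*\<^sup>* c x"
proof
  assume cx: "(Rt w P')\<^sup>*\<^sup>* c x"
  have xd: "(Rt v P)\<^sup>*\<^sup>* x d" using rt_sym[OF assms(1)] .
  have "(Rt w P')\<^sup>*\<^sup>* c d"
  proof (rule class_sub[OF xd _ cx])
    fix y assume "(Rt v P)\<^sup>*\<^sup>* x y"
    then have "(Rt v P)\<^sup>*\<^sup>* d y" using assms(1) by (meson rtranclp_trans)
    then show "y \<notin> half_edges_at H eps w" using avoid by blast
  qed
  then show False using assms(3) by blast
qed


lemma rt_H: "(Rt v P)\<^sup>*\<^sup>* d y \<Longrightarrow> d \<in> H \<Longrightarrow> y \<in> H"
  by (induction rule: rtranclp_induct) (auto dest: Rt_H)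

lemma same_vertex_Rt: "x \<in> half_edges_at H eps u \<Longrightarrow> y \<in> half_edges_at H eps u \<Longrightarrow> u \<noteq> v \<Longrightarrow> Rt v P x y"
  unfolding Rt_def half_edges_at_def by auto

lemma leaf:
  fixes C :: "'c set" and vv :: "'c \<Rightarrow> 'v" and PP :: "'c \<Rightarrow> 'h set" and pp qq :: "'c \<Rightarrow> 'h"
  assumes finC: "finite C" and neC: "C \<noteq> {}"
    and inj: "inj_on vv C"
    and PPs: "\<And>c. c \<in> C \<Longrightarrow> PP c \<subseteq> half_edges_at H eps (vv c)"
    and pps: "\<And>c. c \<in> C \<Longrightarrow> pp c \<in> PP c"
    and qqs: "\<And>c. c \<in> C \<Longrightarrow> qq c \<in> half_edges_at H eps (vv c) \<and> qq c \<notin> PP c"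
  shows "\<exists>c\<in>C. \<exists>d. (d = pp c \<or> d = qq c) \<and>
     (\<forall>c'\<in>C. c' \<noteq> c \<longrightarrow> (\<forall>y. (Rt (vv c) (PP c))\<^sup>*\<^sup>* d y \<longrightarrow> y \<notin> half_edges_at H eps (vv c')))"
    (is "\<exists>c\<in>C. \<exists>d. ?L c d")
proof -
  define cls where "cls c d = {y. (Rt (vv c) (PP c))\<^sup>*\<^sup>* d y}" for c d
  have sepc: "\<not> (Rt (vv c) (PP c))\<^sup>*\<^sup>* (pp c) (qq c)" if "c \<in> C" for c
    using sep[OF PPs[OF that] pps[OF that]] qqs[OF that] by blast
  have ppH: "pp c \<in> half_edges_at H eps (vv c)" if "c \<in> C" for c using PPs pps that by blast
  have main: "\<forall>c\<in>C. \<forall>d. (d = pp c \<or> d = qq c) \<longrightarrow> card (cls c d) = n \<longrightarrow> (\<exists>c\<in>C. \<exists>d. ?L c d)" for n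
  proof (induction n rule: less_induct)
    case (less n)
    show ?case
    proof (intro ballI allI impI)
      fix c d assume c: "c \<in> C" and d: "d = pp c \<or> d = qq c" and cn: "card (cls c d) = n"
      have dH: "d \<in> half_edges_at H eps (vv c)" using d ppH[OF c] qqs[OF c] by blast
      show "\<exists>c\<in>C. \<exists>d. ?L c d"
      proof (cases "?L c d")
        case True then show ?thesis using c by blast
      next
        case False
        then obtain w y where w: "w \<in> C" "w \<noteq> c" and y: "(Rt (vv c) (PP c))\<^sup>*\<^sup>* d y" "y \<in> half_edges_at H eps (vv w)"
          using d by blast
        have vne: "vv w \<noteq> vv c" using inj w c by (metis inj_on_contraD)
        have allw: "(Rt (vv c) (PP c))\<^sup>*\<^sup>* d h" if "h \<in> half_edges_at H eps (vv w)" for h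
          using y same_vertex_Rt[OF y(2) that vne] by (meson rtranclp.rtrancl_into_rtrancl)
        define hc where "hc = pp c"
        define d' where "d' = (if (Rt (vv w) (PP w))\<^sup>*\<^sup>* (pp w) hc then qq w else pp w)"
        define o' where "o' = (if (Rt (vv w) (PP w))\<^sup>*\<^sup>* (pp w) hc then pp w else qq w)"
        have d'H: "d' \<in> half_edges_at H eps (vv w)" "o' \<in> half_edges_at H eps (vv w)"
          unfolding d'_def o'_def using ppH[OF w(1)] qqs[OF w(1)] by auto
        have sepw: "\<not> (Rt (vv w) (PP w))\<^sup>*\<^sup>* d' o'"
          unfolding d'_def o'_def using sepc[OF w(1)] rt_sym[of "vv w" "PP w" "qq w" "pp w"] by auto
        have avoid: "y \<notin> half_edges_at H eps (vv c)" if "(Rt (vv w) (PP w))\<^sup>*\<^sup>* d' y" for y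
        proof
          assume yc: "y \<in> half_edges_at H eps (vv c)"
          have "Rt (vv w) (PP w) y hc" using same_vertex_Rt[OF yc ppH[OF c]] vne unfolding hc_def by auto
          then have dh: "(Rt (vv w) (PP w))\<^sup>*\<^sup>* d' hc" using that by (meson rtranclp.rtrancl_into_rtrancl)
          show False
          proof (cases "(Rt (vv w) (PP w))\<^sup>*\<^sup>* (pp w) hc")
            case True
            then have "(Rt (vv w) (PP w))\<^sup>*\<^sup>* (pp w) (qq w)"
            proof -
              have "(Rt (vv w) (PP w))\<^sup>*\<^sup>* (qq w) hc" using dh True unfolding d'_def by simp
              then have "(Rt (vv w) (PP w))\<^sup>*\<^sup>* hc (qq w)" by (rule rt_sym)
              then show ?thesis by (rule rtranclp_trans[OF True])
            qed
            then show False using sepc[OF w(1)] by blast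
          next
            case False
            then show False using dh unfolding d'_def by simp
          qed
        qed
        have sub: "cls w d' \<subseteq> cls c d"
        proof
          fix x assume "x \<in> cls w d'"
          then have "(Rt (vv w) (PP w))\<^sup>*\<^sup>* d' x" unfolding cls_def by simp
          then have "(Rt (vv c) (PP c))\<^sup>*\<^sup>* d x"
            by (rule class_sub) (use avoid allw d'H in auto)
          then show "x \<in> cls c d" unfolding cls_def by simp
        qed
        have o1: "o' \<in> cls c d" using allw d'H unfolding cls_def by simp
        have o2: "o' \<notin> cls w d'" using sepw unfolding cls_def by simp
        have fin: "finite (cls c d)"
        proof (rule finite_subset[OF _ finH])
          show "cls c d \<subseteq> H" unfolding cls_def using rt_H dH unfolding half_edges_at_def by auto
        qed
        have "card (cls w d') < card (cls c d)"
        proof (rule psubset_card_mono[OF fin])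
          show "cls w d' \<subset> cls c d" using sub o1 o2 by blast
        qed
        then have lt: "card (cls w d') < n" using cn by simp
        have "d' = pp w \<or> d' = qq w" unfolding d'_def by auto
        then show ?thesis using less.IH[OF lt] w(1) by blast
      qed
    qed
  qed
  obtain c0 where c0: "c0 \<in> C" using neC by blast
  show ?thesis using main[of "card (cls c0 (pp c0))"] c0 by blast
qed


end

definition wx :: "('h \<times> 'h) list \<Rightarrow> nat \<Rightarrow> 'h" where "wx W i = snd (W!i)"
definition wy :: "('h \<times> 'h) list \<Rightarrow> nat \<Rightarrow> 'h" where "wy W i = fst (W!(Suc i mod length W))"

lemma walk_edge_wxy: "walk_edge W i = {wx W i, wy W i}"
  unfolding walk_edge_def wx_def wy_def by simp

lemma uniq_edge:
  assumes d: "distinct (walk_half_edges W)" and i: "i < length W" and j: "j < length W"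
    and e: "walk_edge W i = walk_edge W j"
  shows "i = j"
proof -
  let ?L = "walk_half_edges W"
  have lL: "length ?L = 2 * length W" by (rule walk_half_edges_length)
  have nx: "?L!(2*k+1) = wx W k" if "k < length W" for k
    using walk_half_edges_nth[of "2*k+1" W] that unfolding wx_def by simp
  have ny: "?L!(2*(Suc k mod length W)) = wy W k" if "k < length W" for k
  proof -
    have "Suc k mod length W < length W" using that by (intro mod_less_divisor) linarith
    then show ?thesis using walk_half_edges_nth[of "2*(Suc k mod length W)" W] unfolding wy_def by simp
  qed
  have "wx W i \<in> {wx W j, wy W j}" using e walk_edge_wxy by (metis insertI1)
  then consider "wx W i = wx W j" | "wx W i = wy W j" by blast
  then show ?thesis
  proof cases
    case 1
    then have "?L!(2*i+1) = ?L!(2*j+1)" using nx i j by simp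
    then have "2*i+1 = 2*j+1" using d i j lL by (simp add: nth_eq_iff_index_eq)
    then show ?thesis by simp
  next
    case 2
    have m: "Suc j mod length W < length W" using j by (intro mod_less_divisor) linarith
    then have "?L!(2*i+1) = ?L!(2*(Suc j mod length W))" using nx[OF i] ny[OF j] 2 by simp
    then have "2*i+1 = 2*(Suc j mod length W)" using d i m lL by (simp add: nth_eq_iff_index_eq)
    moreover have "even (2*(Suc j mod length W))" by simp
    ultimately have "even (2*i+1)" by metis
    then show ?thesis by simp
  qed
qed

lemma sum_rot:
  assumes "0 < n"
  shows "(\<Sum>i<n. g (Suc i mod n)) = (\<Sum>i<n. (g i :: 'a :: comm_monoid_add))"
proof -
  obtain m where n: "n = Suc m" using assms by (metis gr0_implies_Suc)
  have "(\<Sum>i<Suc m. g (Suc i mod Suc m)) = (\<Sum>i<m. g (Suc i mod Suc m)) + g (Suc m mod Suc m)"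
    by simp
  also have "(\<Sum>i<m. g (Suc i mod Suc m)) = (\<Sum>i<m. g (Suc i))" by (rule sum.cong) auto
  also have "(\<Sum>i<m. g (Suc i)) + g (Suc m mod Suc m) = g 0 + (\<Sum>i<m. g (Suc i))" by (simp add: add.commute)
  also have "\<dots> = (\<Sum>i<Suc m. g i)" by (rule sum.lessThan_Suc_shift[symmetric])
  finally show ?thesis using n by simp
qed

context G
begin

lemma entry_formula:
  assumes oc: "oriented_circuit H E eps W" and WT: "walk_edges W \<subseteq> insert r T" and i0: "i0 < length W"
    and ri0: "walk_edge W i0 = r" and rT: "r \<notin> T"
    and dv: "directed_version H E Tl"
    and P: "P \<subseteq> half_edges_at H eps v" and p: "p \<in> P" and Pt: "ori t = P"
  shows "(\<Sum>e\<in>E. of_int (sigma Tl W e) * Delta Tl ori e t) =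
     of_bool ((Rt v P)\<^sup>*\<^sup>* p (wx W i0)) - of_bool ((Rt v P)\<^sup>*\<^sup>* p (wy W i0))"
proof -
  define n where "n = length W"
  have n0: "0 < n" using i0 unfolding n_def by linarith
  have cw: "closed_walk H E eps W" and dW: "distinct (walk_half_edges W)"
    using oc unfolding oriented_circuit_def by auto
  have eE: "walk_edge W i \<in> E" if "i < n" for i using cw that unfolding closed_walk_def n_def by auto
  have tr: "directed_single_transition H eps (W!i)" if "i < n" for i
    using cw that unfolding closed_walk_def n_def by auto
  define sg where "sg i = (if wx W i \<in> Tl then 1 else - 1 :: rat)" for i
  define X where "X = {x. (Rt v P)\<^sup>*\<^sup>* p x}"
  have Xa: "h \<in> X \<longleftrightarrow> h \<in> P" if "h \<in> half_edges_at H eps v" for h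
  proof
    assume "h \<in> X"
    then show "h \<in> P" using sep[OF P p that] unfolding X_def by blast
  next
    assume "h \<in> P"
    then have "Rt v P p h" using P p that unfolding Rt_def half_edges_at_def by auto
    then show "h \<in> X" unfolding X_def by auto
  qed
  have Xb: "x \<in> X \<longleftrightarrow> y \<in> X" if "Rt v P x y" for x y
  proof
    assume "x \<in> X" then show "y \<in> X" using that unfolding X_def by (auto intro: rtranclp.rtrancl_into_rtrancl)
  next
    assume "y \<in> X" then show "x \<in> X" using Rt_sym[OF that] unfolding X_def by (auto intro: rtranclp.rtrancl_into_rtrancl)
  qed
  have S1: "of_int (sigma Tl W e) = (\<Sum>i\<in>{i. i < n \<and> walk_edge W i = e}. sg i)" for e
  proof -
    let ?A = "{i. i < n \<and> walk_edge W i = e}"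
    have finA: "finite ?A" by simp
    have "(\<Sum>i\<in>?A. sg i) = (\<Sum>i\<in>?A \<inter> {i. wx W i \<in> Tl}. 1) + (\<Sum>i\<in>?A \<inter> - {i. wx W i \<in> Tl}. -1)"
      unfolding sg_def by (rule sum.If_cases[OF finA])
    also have "\<dots> = of_nat (card (?A \<inter> {i. wx W i \<in> Tl})) - of_nat (card (?A \<inter> - {i. wx W i \<in> Tl}))"
      by (simp add: sum_negf)
    also have "?A \<inter> {i. wx W i \<in> Tl} = {i. i < length W \<and> walk_edge W i = e \<and> snd (W ! i) \<in> Tl}"
      unfolding n_def wx_def by auto
    also have "?A \<inter> - {i. wx W i \<in> Tl} = {i. i < length W \<and> walk_edge W i = e \<and> snd (W ! i) \<notin> Tl}"
      unfolding n_def wx_def by auto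
    finally show ?thesis unfolding sigma_def by simp
  qed
  have S3: "sg i * Delta Tl ori (walk_edge W i) t = of_bool (wx W i \<in> P) - of_bool (wy W i \<in> P)"
    if "i < n" for i
  proof -
    let ?x = "wx W i" and ?y = "wy W i"
    have eq: "walk_edge W i = {?x, ?y}" by (rule walk_edge_wxy)
    have ee: "{?x, ?y} \<in> E" using eE[OF that] eq by simp
    have ne: "?x \<noteq> ?y" using pair_ne[OF ee] .
    have c1: "card ({?x, ?y} \<inter> Tl) = 1" using dv ee unfolding directed_version_def by blast
    have tl: "?x \<in> Tl \<longleftrightarrow> ?y \<notin> Tl"
    proof -
      have "\<not> (?x \<in> Tl \<and> ?y \<in> Tl)" using c1 ne by (cases "?x \<in> Tl"; cases "?y \<in> Tl") auto
      moreover have "\<not> (?x \<notin> Tl \<and> ?y \<notin> Tl)" using c1 ne by (cases "?x \<in> Tl"; cases "?y \<in> Tl") auto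
      ultimately show ?thesis by blast
    qed
    consider "?x \<in> P" "?y \<notin> P" | "?x \<notin> P" "?y \<in> P" | "?x \<in> P" "?y \<in> P" | "?x \<notin> P" "?y \<notin> P"
      by blast
    then show ?thesis
    proof cases
      case 1
      then have "{?x, ?y} \<inter> P = {?x}" by auto
      then show ?thesis using 1 eq Pt unfolding Delta_def sg_def by auto
    next
      case 2
      then have "{?x, ?y} \<inter> P = {?y}" by auto
      then show ?thesis using 2 eq Pt tl unfolding Delta_def sg_def by auto
    next
      case 3
      then have "{?x, ?y} \<inter> P = {?x, ?y}" by auto
      moreover have "{?x, ?y} \<noteq> {h}" for h using ne by auto
      ultimately show ?thesis using 3 eq Pt unfolding Delta_def sg_def by auto
    next
      case 4
      then have "{?x, ?y} \<inter> P = {}" by auto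
      then show ?thesis using 4 eq Pt unfolding Delta_def sg_def by auto
    qed
  qed
  have "(\<Sum>e\<in>E. of_int (sigma Tl W e) * Delta Tl ori e t) =
      (\<Sum>e\<in>E. (\<Sum>i\<in>{i. i < n \<and> walk_edge W i = e}. sg i * Delta Tl ori (walk_edge W i) t))"
    unfolding S1 by (rule sum.cong) (auto simp: sum_distrib_right)
  also have "\<dots> = (\<Sum>i\<in>{..<n}. sg i * Delta Tl ori (walk_edge W i) t)"
  proof -
    have "(\<Sum>e\<in>E. (\<Sum>i\<in>{i. i \<in> {..<n} \<and> walk_edge W i = e}. sg i * Delta Tl ori (walk_edge W i) t)) =
      (\<Sum>i\<in>{..<n}. sg i * Delta Tl ori (walk_edge W i) t)"
      by (rule sum.group) (use finE eE in auto)
    then show ?thesis by simp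
  qed
  also have "\<dots> = (\<Sum>i<n. of_bool (wx W i \<in> P) - of_bool (wy W i \<in> P))"
    by (rule sum.cong) (use S3 in auto)
  also have "\<dots> = (\<Sum>i<n. of_bool (snd (W!i) \<in> P) - of_bool (fst (W!i) \<in> P))"
  proof -
    have "(\<Sum>i<n. of_bool (wy W i \<in> P)) = (\<Sum>i<n. of_bool (fst (W!i) \<in> P) :: rat)"
      unfolding wy_def n_def[symmetric] by (rule sum_rot[OF n0])
    then show ?thesis unfolding sum_subtractf wx_def by simp
  qed
  also have "\<dots> = (\<Sum>i<n. of_bool (snd (W!i) \<in> X) - of_bool (fst (W!i) \<in> X))"
  proof (rule sum.cong)
    fix i assume "i \<in> {..<n}"
    then have i: "i < n" by simp
    obtain a b where ab: "W!i = (a,b)" by fastforce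
    have t: "a \<in> H" "b \<in> H" "eps a = eps b" using tr[OF i] ab unfolding directed_single_transition_def by auto
    show "of_bool (snd (W!i) \<in> P) - of_bool (fst (W!i) \<in> P) = (of_bool (snd (W!i) \<in> X) - of_bool (fst (W!i) \<in> X) :: rat)"
    proof (cases "eps a = v")
      case True
      then have "a \<in> half_edges_at H eps v" "b \<in> half_edges_at H eps v" using t unfolding half_edges_at_def by auto
      then show ?thesis using Xa ab by simp
    next
      case False
      then have "a \<notin> P" "b \<notin> P" using P t unfolding half_edges_at_def by auto
      moreover have "Rt v P a b" using t False unfolding Rt_def by auto
      ultimately show ?thesis using Xb ab by simp
    qed
  qed simp
  also have "\<dots> = (\<Sum>i<n. of_bool (wx W i \<in> X) - of_bool (wy W i \<in> X))"
  proof -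
    have "(\<Sum>i<n. of_bool (wy W i \<in> X)) = (\<Sum>i<n. of_bool (fst (W!i) \<in> X) :: rat)"
      unfolding wy_def n_def[symmetric] by (rule sum_rot[OF n0])
    then show ?thesis unfolding sum_subtractf wx_def by simp
  qed
  also have "\<dots> = of_bool (wx W i0 \<in> X) - of_bool (wy W i0 \<in> X)"
  proof -
    have z: "of_bool (wx W i \<in> X) - of_bool (wy W i \<in> X) = (0::rat)" if "i \<in> {..<n} - {i0}" for i
    proof -
      have i: "i < n" "i \<noteq> i0" using that by auto
      have "walk_edge W i \<in> insert r T" using WT i unfolding walk_edges_def n_def by auto
      moreover have "walk_edge W i \<noteq> r" using uniq_edge[OF dW, of i i0] i i0 ri0 unfolding n_def by auto
      ultimately have "walk_edge W i \<in> T" by blast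
      then have "{wx W i, wy W i} \<in> T" by (simp add: walk_edge_wxy)
      then have "Rt v P (wx W i) (wy W i)" unfolding Rt_def by simp
      then show ?thesis using Xb by simp
    qed
    have "(\<Sum>i<n. of_bool (wx W i \<in> X) - of_bool (wy W i \<in> X)) =
        (of_bool (wx W i0 \<in> X) - of_bool (wy W i0 \<in> X)) + (\<Sum>i\<in>{..<n} - {i0}. of_bool (wx W i \<in> X) - of_bool (wy W i \<in> X) :: rat)"
      by (rule sum.remove) (use i0 n_def in auto)
    also have "(\<Sum>i\<in>{..<n} - {i0}. of_bool (wx W i \<in> X) - of_bool (wy W i \<in> X) :: rat) = 0"
      by (rule sum.neutral) (use z in blast)
    finally show ?thesis by simp
  qed
  finally show ?thesis unfolding X_def by simp
qed


lemma row_conn: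
  assumes oc: "oriented_circuit H E eps W" and WT: "walk_edges W \<subseteq> insert r T" and i0: "i0 < length W"
    and ri0: "walk_edge W i0 = r"
  shows "Ra\<^sup>*\<^sup>* (wy W i0) (wx W i0)"
proof -
  define n where "n = length W"
  have n0: "0 < n" using i0 unfolding n_def by linarith
  have cw: "closed_walk H E eps W" and dW: "distinct (walk_half_edges W)"
    using oc unfolding oriented_circuit_def by auto
  have tr: "Ra (fst (W!i)) (snd (W!i))" if "i < n" for i
  proof -
    have "directed_single_transition H eps (W!i)" using cw that unfolding closed_walk_def n_def by auto
    then show ?thesis unfolding directed_single_transition_def Ra_def by auto
  qed
  have ed: "Ra (wx W i) (wy W i)" if "i < n" "i \<noteq> i0" for i
  proof -
    have "walk_edge W i \<in> insert r T" using WT that unfolding walk_edges_def n_def by auto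
    moreover have "walk_edge W i \<noteq> r" using uniq_edge[OF dW, of i i0] that i0 ri0 unfolding n_def by auto
    ultimately have "walk_edge W i \<in> T" by blast
    then show ?thesis unfolding Ra_def by (simp add: walk_edge_wxy)
  qed
  have ne: "(Suc i0 + k) mod n \<noteq> i0" if "Suc k < n" for k
  proof
    assume a: "(Suc i0 + k) mod n = i0"
    show False
    proof (cases "Suc i0 + k < n")
      case True then show False using a by simp
    next
      case False
      then have "(Suc i0 + k) mod n = (Suc i0 + k - n) mod n" by (simp add: le_mod_geq)
      also have "\<dots> = Suc i0 + k - n" using that i0 n_def by simp
      finally show False using a that by simp
    qed
  qed
  have claim: "k < n \<Longrightarrow> Ra\<^sup>*\<^sup>* (wy W i0) (snd (W!((Suc i0 + k) mod n)))" for k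
  proof (induction k)
    case 0
    have "Suc i0 mod n < n" using n0 by simp
    then show ?case using tr[of "Suc i0 mod n"] unfolding wy_def n_def by auto
  next
    case (Suc k)
    define j where "j = (Suc i0 + k) mod n"
    have j: "j < n" "j \<noteq> i0" using n0 ne[of k] Suc.prems unfolding j_def by auto
    have IH: "Ra\<^sup>*\<^sup>* (wy W i0) (wx W j)" using Suc.IH Suc.prems unfolding j_def wx_def by simp
    have sj: "Suc j mod n = (Suc i0 + Suc k) mod n" unfolding j_def by (simp add: mod_Suc_eq)
    have "Ra (wx W j) (wy W j)" using ed j by simp
    moreover have "wy W j = fst (W!((Suc i0 + Suc k) mod n))" using sj unfolding wy_def n_def by simp
    moreover have "Ra (fst (W!((Suc i0 + Suc k) mod n))) (snd (W!((Suc i0 + Suc k) mod n)))"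
      using tr n0 by simp
    ultimately have "Ra (wx W j) (fst (W!((Suc i0 + Suc k) mod n)))"
      "Ra (fst (W!((Suc i0 + Suc k) mod n))) (snd (W!((Suc i0 + Suc k) mod n)))" by auto
    then show ?case using IH by (meson rtranclp.rtrancl_into_rtrancl)
  qed
  have "(Suc i0 + (n - 1)) mod n = i0" using n0 i0 n_def by simp
  then show ?thesis using claim[of "n - 1"] n0 unfolding wx_def by simp
qed


lemma trans_facts:
  assumes t: "t \<in> transitions V H eps" and to: "transitional_orientation V H eps ori"
  shows "\<exists>v\<in>V. t \<in> transitions_at H eps v \<and> ori t \<subseteq> half_edges_at H eps v \<and> ori t \<noteq> {} \<and>
     half_edges_at H eps v - ori t \<noteq> {}"
proof -
  obtain v where v: "v \<in> V" "t \<in> transitions_at H eps v" using t unfolding transitions_def by blast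
  then obtain s1 s2 where s: "t = {s1, s2}" "s1 \<union> s2 = half_edges_at H eps v" "s1 \<inter> s2 = {}"
    "card s1 = 2" "card s2 = 2" unfolding transitions_at_def by blast
  have o: "ori t = s1 \<or> ori t = s2" using to t s(1) unfolding transitional_orientation_def by auto
  have ne: "s1 \<noteq> {}" "s2 \<noteq> {}" using s(4,5) by auto
  show ?thesis
  proof (intro bexI[OF _ v(1)] conjI v(2))
    show "ori t \<subseteq> half_edges_at H eps v" using o s(2) by auto
    show "ori t \<noteq> {}" using o ne by auto
    show "half_edges_at H eps v - ori t \<noteq> {}"
    proof (cases "ori t = s1")
      case True
      then have "half_edges_at H eps v - ori t = s2" using s(2,3) by auto
      then show ?thesis using ne by simp
    next
      case False
      then have "ori t = s2" using o by simp
      then have "half_edges_at H eps v - ori t = s1" using s(2,3) by auto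
      then show ?thesis using ne by simp
    qed
  qed
qed

lemma final:
  assumes dv: "directed_version H E Tl" and sfb: "strictly_fundamental_basis H E eps T B"
    and to: "transitional_orientation V H eps ori" and tv: "transversal V H eps S"
  shows "totally_unimodular (CM_Delta E Tl B ori) (E - T) S"
proof -
  define pp where "pp t = (SOME h. h \<in> ori t)" for t
  define vt where "vt t = eps (pp t)" for t
  define qq where "qq t = (SOME h. h \<in> half_edges_at H eps (vt t) \<and> h \<notin> ori t)" for t
  define X where "X t = {x. (Rt (vt t) (ori t))\<^sup>*\<^sup>* (pp t) x}" for t
  have Strans: "S \<subseteq> transitions V H eps" using tv unfolding transversal_def by simp
  have tf: "t \<in> transitions_at H eps (vt t) \<and> vt t \<in> V \<and> ori t \<subseteq> half_edges_at H eps (vt t) \<and>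
      pp t \<in> ori t \<and> qq t \<in> half_edges_at H eps (vt t) \<and> qq t \<notin> ori t" if tS: "t \<in> S" for t
  proof -
    have tT: "t \<in> transitions V H eps" using tS Strans by blast
    obtain v where v: "v \<in> V" "t \<in> transitions_at H eps v" "ori t \<subseteq> half_edges_at H eps v" "ori t \<noteq> {}"
      "half_edges_at H eps v - ori t \<noteq> {}"
      using trans_facts[OF tT to] by blast
    have p: "pp t \<in> ori t" unfolding pp_def using v(4) by (simp add: some_in_eq)
    have vv: "vt t = v" using p v(3) unfolding vt_def half_edges_at_def by auto
    have "\<exists>h. h \<in> half_edges_at H eps (vt t) \<and> h \<notin> ori t" using v(5) vv by blast
    then have "qq t \<in> half_edges_at H eps (vt t) \<and> qq t \<notin> ori t" unfolding qq_def by (rule someI_ex)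
    then show ?thesis using v vv p by simp
  qed
  have injS: "inj_on vt S"
  proof (rule inj_onI)
    fix t t' assume a: "t \<in> S" "t' \<in> S" "vt t = vt t'"
    have "t \<in> transitions_at H eps (vt t)" "vt t \<in> V" using tf[OF a(1)] by auto
    moreover have "t' \<in> transitions_at H eps (vt t)" using tf[OF a(2)] a(3) by simp
    ultimately have "t \<in> transitions_at H eps (vt t)" "t' \<in> transitions_at H eps (vt t)" "vt t \<in> V" by auto
    then show "t = t'" using tv a(1,2) unfolding transversal_def by blast
  qed
  have sepS: "\<not> (Rt (vt t) (ori t))\<^sup>*\<^sup>* (pp t) (qq t)" if "t \<in> S" for t
    using sep[of "ori t" "vt t" "pp t" "qq t"] tf[OF that] by blast
  have Bfacts: "oriented_circuit H E eps (B r) \<and> r \<in> walk_edges (B r) \<and> walk_edges (B r) \<subseteq> insert r T"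
    if "r \<in> E - T" for r
    using sfb that unfolding strictly_fundamental_basis_def by blast
  define i0 where "i0 r = (SOME i. i < length (B r) \<and> walk_edge (B r) i = r)" for r
  have i0f: "i0 r < length (B r) \<and> walk_edge (B r) (i0 r) = r" if "r \<in> E - T" for r
  proof -
    have "\<exists>i. i < length (B r) \<and> walk_edge (B r) i = r" using Bfacts[OF that] unfolding walk_edges_def by blast
    then show ?thesis unfolding i0_def by (rule someI_ex)
  qed
  define xr where "xr r = wx (B r) (i0 r)" for r
  define yr where "yr r = wy (B r) (i0 r)" for r
  have entry: "CM_Delta E Tl B ori r t = ent X (xr r, yr r) t" if "r \<in> E - T" "t \<in> S" for r t
  proof -
    have "CM_Delta E Tl B ori r t = (\<Sum>e\<in>E. of_int (sigma Tl (B r) e) * Delta Tl ori e t)"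
      unfolding CM_Delta_def by simp
    also have "\<dots> = of_bool ((Rt (vt t) (ori t))\<^sup>*\<^sup>* (pp t) (wx (B r) (i0 r))) -
        of_bool ((Rt (vt t) (ori t))\<^sup>*\<^sup>* (pp t) (wy (B r) (i0 r)))"
      by (rule entry_formula) (use Bfacts[OF that(1)] i0f[OF that(1)] that dv tf[OF that(2)] in auto)
    finally show ?thesis unfolding ent_def X_def xr_def yr_def by simp
  qed
  have rowc: "Ra\<^sup>*\<^sup>* (xr r) (yr r)" if "r \<in> E - T" for r
  proof -
    have "Ra\<^sup>*\<^sup>* (yr r) (xr r)" unfolding xr_def yr_def
      by (rule row_conn) (use Bfacts[OF that] i0f[OF that] in auto)
    then show ?thesis by (rule ra_sym)
  qed
  have classes: "of_bool (x \<in> X t) + of_bool ((Rt (vt t) (ori t))\<^sup>*\<^sup>* (qq t) x) = (of_bool (Ra\<^sup>*\<^sup>* (pp t) x) :: rat)"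
    if "t \<in> S" for t x
  proof -
    have disj: "\<not> (x \<in> X t \<and> (Rt (vt t) (ori t))\<^sup>*\<^sup>* (qq t) x)"
    proof
      assume "x \<in> X t \<and> (Rt (vt t) (ori t))\<^sup>*\<^sup>* (qq t) x"
      then have "(Rt (vt t) (ori t))\<^sup>*\<^sup>* (pp t) x" "(Rt (vt t) (ori t))\<^sup>*\<^sup>* x (qq t)"
        unfolding X_def using rt_sym by auto
      then show False using sepS[OF that] by (meson rtranclp_trans)
    qed
    have un: "x \<in> X t \<or> (Rt (vt t) (ori t))\<^sup>*\<^sup>* (qq t) x \<longleftrightarrow> Ra\<^sup>*\<^sup>* (pp t) x"
    proof
      assume "x \<in> X t \<or> (Rt (vt t) (ori t))\<^sup>*\<^sup>* (qq t) x"
      then show "Ra\<^sup>*\<^sup>* (pp t) x"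
      proof
        assume "x \<in> X t" then show ?thesis unfolding X_def using rt_ra by auto
      next
        assume a: "(Rt (vt t) (ori t))\<^sup>*\<^sup>* (qq t) x"
        have "Ra (pp t) (qq t)" using tf[OF that] unfolding Ra_def half_edges_at_def by auto
        then show ?thesis using rt_ra[OF a] by (meson converse_rtranclp_into_rtranclp)
      qed
    next
      assume "Ra\<^sup>*\<^sup>* (pp t) x"
      then show "x \<in> X t \<or> (Rt (vt t) (ori t))\<^sup>*\<^sup>* (qq t) x"
        using two_classes[of "pp t" x "vt t" "pp t" "ori t" "qq t"] tf[OF that] unfolding X_def by auto
    qed
    show ?thesis using disj un by auto
  qed
  have leafS: "\<exists>c\<in>C. \<exists>D (s::rat). (s = 1 \<or> s = -1) \<and>
       (\<forall>x\<in>D. \<forall>y\<in>D. Ra\<^sup>*\<^sup>* x y) \<and>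
       (\<forall>a b. Ra\<^sup>*\<^sup>* a b \<longrightarrow> of_bool (a\<in>D) - of_bool (b\<in>D) = s * ent X (a,b) c) \<and>
       (\<forall>c'\<in>C. c' \<noteq> c \<longrightarrow> D \<subseteq> X c' \<or> D \<inter> X c' = {})"
    if C: "C \<subseteq> S" "finite C" "C \<noteq> {}" for C
  proof -
    obtain c d where c: "c \<in> C" and d: "d = pp c \<or> d = qq c"
      and av: "\<forall>c'\<in>C. c' \<noteq> c \<longrightarrow> (\<forall>y. (Rt (vt c) (ori c))\<^sup>*\<^sup>* d y \<longrightarrow> y \<notin> half_edges_at H eps (vt c'))"
      using leaf[of C vt ori pp qq] C injS tf inj_on_subset[OF injS C(1)] by (smt (verit) subsetD)
    have cS: "c \<in> S" using c C by blast
    define D where "D = {y. (Rt (vt c) (ori c))\<^sup>*\<^sup>* d y}"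
    define s where "s = (if d = pp c then 1 else -1 :: rat)"
    show ?thesis
    proof (intro bexI[OF _ c] exI[of _ D] exI[of _ s] conjI)
      show "s = 1 \<or> s = -1" unfolding s_def by simp
      show "\<forall>x\<in>D. \<forall>y\<in>D. Ra\<^sup>*\<^sup>* x y"
      proof (intro ballI)
        fix x y assume "x \<in> D" "y \<in> D"
        then have "Ra\<^sup>*\<^sup>* d x" "Ra\<^sup>*\<^sup>* d y" unfolding D_def using rt_ra by auto
        then show "Ra\<^sup>*\<^sup>* x y" using ra_sym by (meson rtranclp_trans)
      qed
      show "\<forall>a b. Ra\<^sup>*\<^sup>* a b \<longrightarrow> of_bool (a\<in>D) - of_bool (b\<in>D) = s * ent X (a,b) c"
      proof (intro allI impI)
        fix a b assume ab: "Ra\<^sup>*\<^sup>* a b"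
        show "of_bool (a\<in>D) - of_bool (b\<in>D) = s * ent X (a,b) c"
        proof (cases "d = pp c")
          case True
          then show ?thesis unfolding s_def D_def ent_def X_def by simp
        next
          case False
          then have dq: "d = qq c" using d by simp
          have "Ra\<^sup>*\<^sup>* (pp c) a \<longleftrightarrow> Ra\<^sup>*\<^sup>* (pp c) b"
            using ab ra_sym by (meson rtranclp_trans)
          then have "of_bool (a \<in> X c) + of_bool (a \<in> D) = (of_bool (b \<in> X c) + of_bool (b \<in> D) :: rat)"
            using classes[OF cS, of a] classes[OF cS, of b] unfolding D_def dq by simp
          then show ?thesis unfolding s_def ent_def using False by (simp add: algebra_simps)
        qed
      qed
      show "\<forall>c'\<in>C. c' \<noteq> c \<longrightarrow> D \<subseteq> X c' \<or> D \<inter> X c' = {}"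
      proof (intro ballI impI)
        fix c' assume c': "c' \<in> C" "c' \<noteq> c"
        have avoid: "\<And>y. (Rt (vt c) (ori c))\<^sup>*\<^sup>* d y \<Longrightarrow> y \<notin> half_edges_at H eps (vt c')"
          using av c' by blast
        show "D \<subseteq> X c' \<or> D \<inter> X c' = {}"
        proof (cases "(Rt (vt c') (ori c'))\<^sup>*\<^sup>* (pp c') d")
          case True
          have "D \<subseteq> X c'"
          proof
            fix x assume "x \<in> D"
            then have "(Rt (vt c) (ori c))\<^sup>*\<^sup>* d x" unfolding D_def by simp
            then show "x \<in> X c'" using class_sub[OF _ avoid True] unfolding X_def by blast
          qed
          then show ?thesis by blast
        next
          case False
          have "D \<inter> X c' = {}"
          proof (rule ccontr)
            assume "D \<inter> X c' \<noteq> {}"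
            then obtain x where "x \<in> D" "x \<in> X c'" by blast
            then have "(Rt (vt c) (ori c))\<^sup>*\<^sup>* d x" "(Rt (vt c') (ori c'))\<^sup>*\<^sup>* (pp c') x"
              unfolding D_def X_def by auto
            then show False using class_disj[OF _ avoid False] by blast
          qed
          then show ?thesis by blast
        qed
      qed
    qed
  qed
  show ?thesis unfolding totally_unimodular_def
  proof (intro allI impI)
    fix rs cs assume a: "distinct rs \<and> distinct cs \<and> set rs \<subseteq> E - T \<and> set cs \<subseteq> S \<and> length rs = length cs"
    define ps where "ps = map (\<lambda>r. (xr r, yr r)) rs"
    have eq: "mat (length rs) (length cs) (\<lambda>(i, j). CM_Delta E Tl B ori (rs ! i) (cs ! j)) =
        mat (length rs) (length rs) (\<lambda>(i, j). ent X (ps ! i) (cs ! j))"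
    proof (rule eq_matI)
      fix i j assume "i < dim_row (mat (length rs) (length rs) (\<lambda>(i, j). ent X (ps ! i) (cs ! j)))"
        "j < dim_col (mat (length rs) (length rs) (\<lambda>(i, j). ent X (ps ! i) (cs ! j)))"
      then have i: "i < length rs" and j: "j < length cs" using a by auto
      have "rs!i \<in> E - T" "cs!j \<in> S" using a i j nth_mem by blast+
      then show "mat (length rs) (length cs) (\<lambda>(i, j). CM_Delta E Tl B ori (rs ! i) (cs ! j)) $$ (i,j) =
          mat (length rs) (length rs) (\<lambda>(i, j). ent X (ps ! i) (cs ! j)) $$ (i,j)"
        using entry i j a unfolding ps_def by simp
    qed (use a in auto)
    have "det (mat (length rs) (length rs) (\<lambda>(i, j). ent X (ps ! i) (cs ! j))) \<in> {-1,0,1}"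
    proof (rule tu_core[where Rel = "Ra\<^sup>*\<^sup>*" and CC = S])
      show "\<And>a b. Ra\<^sup>*\<^sup>* a b \<Longrightarrow> Ra\<^sup>*\<^sup>* b a" by (rule ra_sym)
      show "\<And>a b c. Ra\<^sup>*\<^sup>* a b \<Longrightarrow> Ra\<^sup>*\<^sup>* b c \<Longrightarrow> Ra\<^sup>*\<^sup>* a c" by (rule rtranclp_trans)
      show "\<And>C. C \<subseteq> S \<Longrightarrow> finite C \<Longrightarrow> C \<noteq> {} \<Longrightarrow> \<exists>c\<in>C. \<exists>D (s::rat). (s = 1 \<or> s = -1) \<and>
       (\<forall>x\<in>D. \<forall>y\<in>D. Ra\<^sup>*\<^sup>* x y) \<and>
       (\<forall>a b. Ra\<^sup>*\<^sup>* a b \<longrightarrow> of_bool (a\<in>D) - of_bool (b\<in>D) = s * ent X (a,b) c) \<and>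
       (\<forall>c'\<in>C. c' \<noteq> c \<longrightarrow> D \<subseteq> X c' \<or> D \<inter> X c' = {})" by (rule leafS)
      show "length ps = length rs" unfolding ps_def by simp
      show "length cs = length rs" using a by simp
      show "distinct cs" "set cs \<subseteq> S" using a by auto
      show "\<forall>p\<in>set ps. Ra\<^sup>*\<^sup>* (fst p) (snd p)" unfolding ps_def using rowc a by auto
    qed
    then show "det (mat (length rs) (length cs) (\<lambda>(i, j). CM_Delta E Tl B ori (rs ! i) (cs ! j))) \<in> {-1,0,1}"
      unfolding eq .
  qed
qed

end


theorem mainTheorem13:
  fixes V :: "'v set" and H :: "'h set" and E :: "'h set set" and eps :: "'h \<Rightarrow> 'v"
    and Tl :: "'h set" and T :: "'h set set" and B :: "'h set \<Rightarrow> ('h \<times> 'h) list"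
    and ori :: "'h set set \<Rightarrow> 'h set"
  assumes "is_graph V H E eps"
    and "four_regular V H eps"
    and "directed_version H E Tl"
    and "strictly_fundamental_basis H E eps T B"
    and "transitional_orientation V H eps ori"
  shows "totally_transversally_unimodular V H eps (CM_Delta E Tl B ori) (E - T)"
proof -
  have fo: "forest H E eps T" using assms(4) unfolding strictly_fundamental_basis_def maximal_forest_def by blast
  interpret G V H E eps T by unfold_locales (use assms(1) fo in auto)
  show ?thesis unfolding totally_transversally_unimodular_def using final[OF assms(3) assms(4) assms(5)] by blast
qed

end
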